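(* The set of finite factors of $\mathbf{t}_{3/2}$ is closed under bit-wise complement (if $u$ is a factor then so is $\bar u$), and so is the set of finite factors of $\mathbf{t}'$. Consequently, $\mathsf{p}_{\mathbf{t}_{3/2}}(n+1)=2\,\mathsf{p}_{\Delta(\mathbf{t}_{3/2})}(n)$ for all $n\ge 0$.
   Context: Base-$3/2$ expansions: $\langle 0\rangle_{3/2}$ is the empty word, and for $n\ge 1$, writing $2n=3m+d$ with integers $m\ge0$, $d\in\{0,1,2\}$, set $\langle n\rangle_{3/2}=\langle m\rangle_{3/2}\,d$. The Thue--Morse word in base $3/2$ is $\mathbf{t}_{3/2}=(t_n)_{n\ge0}\in\{0,1\}^{\mathbb{N}}$ where $t_n$ is the digit sum of $\langle n\rangle_{3/2}$ modulo $2$; equivalently the unique binary sequence with $t_0=0$, $t_{3n}=t_{3n+1}=t_{2n}$, $t_{3n+2}=1-t_{2n+1}$. Dekking's word $\mathbf{t}'=(x_n)_{n\ge0}$ is the unique binary infinite word with $x_0=0$ such that $\mathbf{t}'=\beta(x_0x_1)\beta(x_2x_3)\cdots$ where $\beta(00)=\beta(01)=010$, $\beta(10)=\beta(11)=101$. The bit-wise complement $\bar u$ of a binary word $u$ is obtained by exchanging $0$ and $1$. For an infinite binary word $\mathbf{x}=(x_n)$, $\Delta(\mathbf{x})=(x_{n+1}-x_n \bmod 2)_{n\ge0}$ is its first difference sequence, and $\mathsf{p}_{\mathbf{x}}(n)$ denotes the number of distinct factors of length $n$ of $\mathbf{x}$. *)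

theory Defs
  imports Main
begin

(* Binary words are represented as nat-valued sequences with values in {0,1}. *)

fun exp32 :: "nat \<Rightarrow> nat list" where
  "exp32 n = (if n = 0 then [] else exp32 ((2 * n) div 3) @ [(2 * n) mod 3])"

definition t32 :: "nat \<Rightarrow> nat" where
  "t32 n = sum_list (exp32 n) mod 2"

definition beta :: "nat \<Rightarrow> nat \<Rightarrow> nat list" where
  "beta a b = (if a = 0 then [0,1,0] else [1,0,1])"

(* t' = beta(x0 x1) beta(x2 x3) ... : block k (positions 3k,3k+1,3k+2) is beta(x_{2k} x_{2k+1}) *)
definition dekking :: "nat \<Rightarrow> nat" where
  "dekking = (THE x. (\<forall>n. x n \<in> {0,1}) \<and> x 0 = 0 \<and>
      (\<forall>k. [x (3*k), x (3*k+1), x (3*k+2)] = beta (x (2*k)) (x (2*k+1))))"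

definition compl_word :: "nat list \<Rightarrow> nat list" where
  "compl_word u = map (\<lambda>a. 1 - a) u"

definition factors :: "(nat \<Rightarrow> nat) \<Rightarrow> nat list set" where
  "factors x = {map x [i..<i+n] | i n. True}"

definition factors_len :: "(nat \<Rightarrow> nat) \<Rightarrow> nat \<Rightarrow> nat list set" where
  "factors_len x n = {map x [i..<i+n] | i. True}"

definition complexity :: "(nat \<Rightarrow> nat) \<Rightarrow> nat \<Rightarrow> nat" where
  "complexity x n = card (factors_len x n)"

definition Delta :: "(nat \<Rightarrow> nat) \<Rightarrow> nat \<Rightarrow> nat" where
  "Delta x n = nat ((int (x (Suc n)) - int (x n)) mod 2)"

definition closed_under_compl :: "nat list set \<Rightarrow> bool" where
  "closed_under_compl S \<longleftrightarrow> (\<forall>u\<in>S. compl_word u \<in> S)"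

end

theory Submission
  imports Defs "HOL-Number_Theory.Cong"
begin

declare exp32.simps[simp del]

lemma t32_0: "t32 0 = 0"
  unfolding t32_def by (subst exp32.simps) simp

lemma t32_rec: "t32 n = (t32 (2*n div 3) + 2*n mod 3) mod 2"
proof (cases "n = 0")
  case True then show ?thesis by (simp add: t32_0)
next
  case False
  then have "exp32 n = exp32 (2*n div 3) @ [2*n mod 3]"
    by (subst exp32.simps) simp
  then show ?thesis by (simp add: t32_def mod_add_left_eq)
qed

lemma t32_lt: "t32 n < 2"
  by (simp add: t32_def)

lemma t32_3: "t32 (3*m) = t32 (2*m)"
  using t32_rec[of "3*m"] t32_lt[of "2*m"] by simp

lemma t32_31: "t32 (3*m+1) = t32 (2*m)"
proof -
  have a: "2*(3*m+1) div 3 = 2*m" "2*(3*m+1) mod 3 = 2" by presburger+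
  show ?thesis using t32_rec[of "3*m+1"] t32_lt[of "2*m"] unfolding a by simp
qed

lemma t32_32: "t32 (3*m+2) = 1 - t32 (2*m+1)"
proof -
  have a: "2*(3*m+2) div 3 = 2*m+1" "2*(3*m+2) mod 3 = 1" by presburger+
  have "t32 (2*m+1) < 2" by (rule t32_lt)
  then show ?thesis using t32_rec[of "3*m+2"] unfolding a
    by (cases "t32 (2*m+1)") auto
qed

lemma t32_1: "t32 1 = 0"
  using t32_31[of 0] t32_0 by simp

lemma t32_2: "t32 2 = 1"
  using t32_32[of 0] t32_1 by (simp add: numeral_2_eq_2)

lemma shiftS: "n \<le> J \<Longrightarrow> t32 (n + 3^J * x) = (t32 n + t32 (2^J * x)) mod 2"
proof (induction J arbitrary: n x)
  case 0
  then show ?case using t32_lt[of x] by (simp add: t32_0)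
next
  case (Suc J)
  define m where "m = n div 3"
  have nm: "n = 3*m + n mod 3" unfolding m_def by simp
  have e: "2^Suc J * x = 2^J * (2*x)" by simp
  consider "n mod 3 = 0" | "n mod 3 = 1" | "n mod 3 = 2" by linarith
  then show ?case
  proof cases
    case 1
    have n: "n = 3*m" using nm 1 by simp
    have "2*m \<le> J" using Suc.prems n by linarith
    have "n + 3^Suc J * x = 3*(m + 3^J*x)" using n by simp
    then have "t32 (n + 3^Suc J * x) = t32 (2*m + 3^J*(2*x))"
      using t32_3[of "m + 3^J*x"] by (simp add: algebra_simps)
    also have "\<dots> = (t32 (2*m) + t32 (2^J*(2*x))) mod 2"
      using Suc.IH \<open>2*m \<le> J\<close> by blast
    finally show ?thesis using n t32_3[of m] by (simp add: ac_simps)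
  next
    case 2
    have n: "n = 3*m+1" using nm 2 by simp
    have "2*m \<le> J" using Suc.prems n by linarith
    have "n + 3^Suc J * x = 3*(m + 3^J*x) + 1" using n by simp
    then have "t32 (n + 3^Suc J * x) = t32 (2*m + 3^J*(2*x))"
      using t32_31[of "m + 3^J*x"] by (simp add: algebra_simps)
    also have "\<dots> = (t32 (2*m) + t32 (2^J*(2*x))) mod 2"
      using Suc.IH \<open>2*m \<le> J\<close> by blast
    finally show ?thesis using n t32_31[of m] by (simp add: ac_simps)
  next
    case 3
    have n: "n = 3*m+2" using nm 3 by simp
    have "2*m+1 \<le> J" using Suc.prems n by linarith
    have "n + 3^Suc J * x = 3*(m + 3^J*x) + 2" using n by simp
    then have "t32 (n + 3^Suc J * x) = 1 - t32 ((2*m+1) + 3^J*(2*x))"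
      using t32_32[of "m + 3^J*x"] by (simp add: algebra_simps)
    also have "\<dots> = 1 - (t32 (2*m+1) + t32 (2^J*(2*x))) mod 2"
      using Suc.IH[OF \<open>2*m+1 \<le> J\<close>, of "2*x"] by simp
    finally have r: "t32 (n + 3^Suc J * x) = 1 - (t32 (2*m+1) + t32 (2^J*(2*x))) mod 2" .
    have "t32 (2*m+1) < 2" "t32 (2^J*(2*x)) < 2" by (rule t32_lt)+
    then show ?thesis using r n t32_32[of m] e
      by (cases "t32 (2*m+1)"; cases "t32 (2^J*(2*x))") (auto simp: ac_simps)
  qed
qed

lemma existsT_Suc: "\<exists>y. t32 (2^Suc K * y) = 1"
proof -
  define b where "b = Suc K + 2"
  have cop: "coprime ((3::nat)^b) (2^Suc K)" by simp
  then have "gcd ((3::nat)^b) (2^Suc K) dvd (2^Suc K - 2)"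
    by (simp add: coprime_iff_gcd_eq_1)
  then obtain Y :: nat where Y: "[(3::nat)^b * Y = 2^Suc K - 2] (mod 2^Suc K)"
    using cong_solve_dvd_nat by blast
  have p2: "(2::nat) \<le> 2^Suc K" by (induction K) auto
  have "(3^b * Y) mod 2^Suc K = (2^Suc K - 2) mod 2^Suc K"
    using Y by (simp add: cong_def)
  then have "(3^b * Y + 2) mod 2^Suc K = ((2^Suc K - 2) + 2) mod 2^Suc K"
    by (metis mod_add_left_eq)
  also have "\<dots> = 0" using p2 by (simp only: le_add_diff_inverse2 mod_self)
  finally have dv: "2^Suc K dvd (3^b * Y + 2)" by (simp add: dvd_eq_mod_eq_0)
  have S: "t32 (2 + 3^b * Y) = (t32 2 + t32 (2^b * Y)) mod 2"
    by (rule shiftS) (simp add: b_def)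
  show ?thesis
  proof (cases "t32 (2^b * Y) = 1")
    case True
    have "2^b * Y = 2^Suc K * (4 * Y)" by (simp add: b_def power_add)
    then show ?thesis using True by metis
  next
    case False
    then have "t32 (2^b * Y) = 0" using t32_lt[of "2^b*Y"] by linarith
    then have "t32 (3^b * Y + 2) = 1" using S t32_2 by (simp add: add.commute)
    then show ?thesis using dv by (metis dvd_def)
  qed
qed

lemma existsT: "\<exists>y. t32 (2^K * y) = 1"
proof -
  obtain y where "t32 (2^Suc K * y) = 1" using existsT_Suc by blast
  then have "t32 (2^K * (2*y)) = 1" by (simp add: mult.assoc mult.left_commute)
  then show ?thesis by blast
qed

lemma compl_shift: "\<exists>D. \<forall>i<N. t32 (a + i + D) = 1 - t32 (a + i)"
proof -
  define J where "J = a + N"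
  obtain y where y: "t32 (2^J * y) = 1" using existsT by blast
  have "\<forall>i<N. t32 (a + i + 3^J*y) = 1 - t32 (a + i)"
  proof (intro allI impI)
    fix i assume "i < N"
    then have "a + i \<le> J" by (simp add: J_def)
    then have "t32 (a + i + 3^J*y) = (t32 (a+i) + t32 (2^J*y)) mod 2" by (rule shiftS)
    then show "t32 (a + i + 3^J*y) = 1 - t32 (a + i)" using y t32_lt[of "a+i"]
      by (cases "t32 (a+i)") auto
  qed
  then show ?thesis by blast
qed

lemma compl_factor_t32:
  "\<exists>q. compl_word (map t32 [i..<i+n]) = map t32 [q..<q+n]"
proof -
  obtain D where D: "\<forall>j<n. t32 (i + j + D) = 1 - t32 (i + j)" using compl_shift by blast
  have "compl_word (map t32 [i..<i+n]) = map t32 [i+D..<i+D+n]"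
    unfolding compl_word_def
  proof (rule nth_equalityI)
    fix j assume "j < length (map (\<lambda>a. 1 - a) (map t32 [i..<i + n]))"
    then have j: "j < n" by simp
    have "t32 (i + j + D) = 1 - t32 (i + j)" using D j by blast
    then show "map (\<lambda>a. 1 - a) (map t32 [i..<i + n]) ! j = map t32 [i + D..<i + D + n] ! j"
      using j by (simp add: add_ac)
  qed simp
  then show ?thesis by blast
qed


lemma closed_t32: "closed_under_compl (factors t32)"
  unfolding closed_under_compl_def factors_def
  using compl_factor_t32 by blast

definition dk :: "nat \<Rightarrow> nat" where
  "dk n = (if n mod 3 = 1 then 1 - t32 (n div 3) else t32 (n div 3))"

lemma dk_2: "dk (2*k) = t32 k"
proof -
  define j where "j = k div 3"
  consider "k = 3*j" | "k = 3*j+1" | "k = 3*j+2" unfolding j_def by linarith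
  then show ?thesis
  proof cases
    case 1
    have a: "(2*k) mod 3 = 0" "(2*k) div 3 = 2*j" using 1 by presburger+
    show ?thesis unfolding dk_def a using 1 t32_3[of j] by simp
  next
    case 2
    have a: "(2*k) mod 3 = 2" "(2*k) div 3 = 2*j" using 2 by presburger+
    show ?thesis unfolding dk_def a using 2 t32_31[of j] by simp
  next
    case 3
    have a: "(2*k) mod 3 = 1" "(2*k) div 3 = 2*j+1" using 3 by presburger+
    show ?thesis unfolding dk_def a using 3 t32_32[of j] by simp
  qed
qed

lemma dk_3: "dk (3*k) = t32 k" "dk (3*k+1) = 1 - t32 k" "dk (3*k+2) = t32 k"
proof -
  have a: "(3*k+1) div 3 = k" "(3*k+1) mod 3 = 1" "(3*k+2) div 3 = k" "(3*k+2) mod 3 = 2"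
    by presburger+
  show "dk (3*k) = t32 k" "dk (3*k+1) = 1 - t32 k" "dk (3*k+2) = t32 k"
    unfolding dk_def a by simp_all
qed

definition DP :: "(nat \<Rightarrow> nat) \<Rightarrow> bool" where
  "DP x \<longleftrightarrow> (\<forall>n. x n \<in> {0,1}) \<and> x 0 = 0 \<and>
      (\<forall>k. [x (3*k), x (3*k+1), x (3*k+2)] = beta (x (2*k)) (x (2*k+1)))"

lemma dk_DP: "DP dk"
  unfolding DP_def
proof (intro conjI allI)
  fix n show "dk n \<in> {0,1}" unfolding dk_def using t32_lt[of "n div 3"] by auto
next
  show "dk 0 = 0" unfolding dk_def by (simp add: t32_0)
next
  fix k
  show "[dk (3*k), dk (3*k+1), dk (3*k+2)] = beta (dk (2*k)) (dk (2*k+1))"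
    unfolding dk_3 dk_2 beta_def using t32_lt[of k] by (cases "t32 k") auto
qed

lemma DP_unique:
  assumes "DP x" shows "x = dk"
proof -
  have vals: "x n < 2" for n
  proof -
    have "x n \<in> {0,1}" using assms unfolding DP_def by blast
    then show ?thesis by auto
  qed
  have blk: "\<And>k. [x (3*k), x (3*k+1), x (3*k+2)] = beta (x (2*k)) (x (2*k+1))"
    using assms unfolding DP_def by blast
  have b3: "x (3*k) = x (2*k) \<and> x (3*k+1) = 1 - x (2*k) \<and> x (3*k+2) = x (2*k)" for k
    using blk[of k] vals[of "2*k"] unfolding beta_def by (cases "x (2*k)") auto
  have x0: "x 0 = 0" using assms unfolding DP_def by blast
  have ev: "x (2*k) = t32 k" for k
  proof (induction k rule: less_induct)
    case (less k)
    define j where "j = k div 3"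
    consider "k = 3*j" | "k = 3*j+1" | "k = 3*j+2" unfolding j_def by linarith
    then show ?case
    proof cases
      case 1
      show ?thesis
      proof (cases "j = 0")
        case True then show ?thesis using 1 x0 t32_0 by simp
      next
        case False
        have "2*j < k" using 1 False by simp
        have "x (2*k) = x (3*(2*j))" using 1 by (simp add: ac_simps)
        also have "\<dots> = x (2*(2*j))" using b3 by blast
        also have "\<dots> = t32 (2*j)" using less \<open>2*j < k\<close> by blast
        also have "\<dots> = t32 k" using 1 t32_3[of j] by simp
        finally show ?thesis .
      qed
    next
      case 2
      have "2*j < k" using 2 by simp
      have "x (2*k) = x (3*(2*j)+2)" using 2 by (simp add: ac_simps)
      also have "\<dots> = x (2*(2*j))" using b3 by blast
      also have "\<dots> = t32 (2*j)" using less \<open>2*j < k\<close> by blast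
      also have "\<dots> = t32 k" using 2 t32_31[of j] by simp
      finally show ?thesis .
    next
      case 3
      have "2*j+1 < k" using 3 by simp
      have e3: "2*k = 3*(2*j+1)+1" using 3 by simp
      have "x (2*k) = x (3*(2*j+1)+1)" by (simp only: e3)
      also have "\<dots> = 1 - x (2*(2*j+1))" using b3 by blast
      also have "\<dots> = 1 - t32 (2*j+1)" using less \<open>2*j+1 < k\<close> by metis
      also have "\<dots> = t32 k" using 3 t32_32[of j] by simp
      finally show ?thesis .
    qed
  qed
  show ?thesis
  proof
    fix n :: nat
    define k where "k = n div 3"
    consider "n = 3*k" | "n = 3*k+1" | "n = 3*k+2" unfolding k_def by linarith
    then show "x n = dk n"
      using b3[of k] ev[of k] dk_3[of k] by cases auto
  qed
qed

lemma dekking_eq: "dekking = dk"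
  unfolding dekking_def
  using dk_DP DP_unique unfolding DP_def[abs_def]
  by (intro the_equality) auto

lemma compl_factor_dk:
  "\<exists>q. compl_word (map dk [i..<i+n]) = map dk [q..<q+n]"
proof -
  obtain D where D: "\<forall>l<i+n+1. t32 (0 + l + D) = 1 - t32 (0 + l)"
    using compl_shift by blast
  have "compl_word (map dk [i..<i+n]) = map dk [i+3*D..<i+3*D+n]"
    unfolding compl_word_def
  proof (rule nth_equalityI)
    fix j assume "j < length (map (\<lambda>a. 1 - a) (map dk [i..<i + n]))"
    then have j: "j < n" by simp
    define m where "m = i + j"
    have "m div 3 < i + n + 1" unfolding m_def using j by linarith
    then have tc: "t32 (m div 3 + D) = 1 - t32 (m div 3)" using D by simp
    have e1: "(i + 3*D + j) div 3 = m div 3 + D" "(i + 3*D + j) mod 3 = m mod 3"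
      unfolding m_def by presburger+
    have "dk (i + 3*D + j) = 1 - dk m"
      unfolding dk_def e1 tc using t32_lt[of "m div 3"] by auto
    then show "map (\<lambda>a. 1 - a) (map dk [i..<i + n]) ! j = map dk [i+3*D..<i+3*D + n] ! j"
      using j unfolding m_def by simp
  qed simp
  then show ?thesis by blast
qed

lemma closed_dekking: "closed_under_compl (factors dekking)"
  unfolding closed_under_compl_def factors_def dekking_eq
  using compl_factor_dk by blast


definition phi :: "nat \<Rightarrow> nat list \<Rightarrow> nat list" where
  "phi n u = map (\<lambda>k. nat ((int (u ! Suc k) - int (u ! k)) mod 2)) [0..<n]"

lemma phi_fac: "phi n (map t32 [i..<i+(n+1)]) = map (Delta t32) [i..<i+n]"
  unfolding phi_def Delta_def
  by (rule nth_equalityI) (simp_all del: upt_Suc)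

lemma phi_compl:
  assumes "\<forall>a\<in>set u. a < 2" "length u = n+1"
  shows "phi n (compl_word u) = phi n u"
  unfolding phi_def compl_word_def
proof (rule nth_equalityI)
  fix k assume "k < length (map (\<lambda>k. nat ((int (map ((-) 1) u ! Suc k) - int (map ((-) 1) u ! k)) mod 2)) [0..<n])"
  then have k: "k < n" by simp
  have a: "u ! k < 2" "u ! Suc k < 2" using assms k by (simp_all add: nth_mem)
  have "nat ((int (1 - u ! Suc k) - int (1 - u ! k)) mod 2) = nat ((int (u ! Suc k) - int (u ! k)) mod 2)"
    using a by (cases "u ! k"; cases "u ! Suc k") auto
  then show "map (\<lambda>k. nat ((int (map ((-) 1) u ! Suc k) - int (map ((-) 1) u ! k)) mod 2)) [0..<n] ! k =
         map (\<lambda>k. nat ((int (u ! Suc k) - int (u ! k)) mod 2)) [0..<n] ! k"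
    using k assms by simp
qed simp

lemma fac_vals: "u \<in> factors_len t32 m \<Longrightarrow> (\<forall>a\<in>set u. a < 2) \<and> length u = m"
  unfolding factors_len_def using t32_lt by auto

lemma fac_compl: "u \<in> factors_len t32 m \<Longrightarrow> compl_word u \<in> factors_len t32 m"
  unfolding factors_len_def using compl_factor_t32 by blast

lemma cc: "\<forall>a\<in>set u. a < 2 \<Longrightarrow> compl_word (compl_word u) = u"
  unfolding compl_word_def by (induction u) auto

lemma complexity_rel: "complexity t32 (n + 1) = 2 * complexity (Delta t32) n"
proof -
  define F where "F = factors_len t32 (n+1)"
  define G where "G = factors_len (Delta t32) n"
  define A where "A = {u \<in> F. u ! 0 = 0}"
  define B where "B = {u \<in> F. u ! 0 = 1}"
  have finF: "finite F"
  proof (rule finite_subset)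
    show "F \<subseteq> {xs. set xs \<subseteq> {0,1} \<and> length xs = n+1}"
      unfolding F_def using fac_vals less_2_cases by fastforce
    show "finite {xs. set xs \<subseteq> {0::nat,1} \<and> length xs = n+1}"
      by (rule finite_lists_length_eq) simp
  qed
  have FAB: "F = A \<union> B"
  proof -
    have "u ! 0 < 2" if "u \<in> F" for u
      using fac_vals[of u "n+1"] that unfolding F_def by (simp add: nth_mem)
    then show ?thesis unfolding A_def B_def by force
  qed
  have disj: "A \<inter> B = {}" unfolding A_def B_def by auto
  have finA: "finite A" "finite B" using finF FAB by auto
  have imgB: "compl_word ` A = B"
  proof
    show "compl_word ` A \<subseteq> B"
    proof
      fix v assume "v \<in> compl_word ` A"
      then obtain u where u: "u \<in> A" "v = compl_word u" by blast
      have l: "length u = n+1" using u fac_vals unfolding A_def F_def by blast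
      have "v \<in> F" using u fac_compl unfolding A_def F_def by blast
      moreover have "v ! 0 = 1" using u l unfolding A_def compl_word_def by simp
      ultimately show "v \<in> B" unfolding B_def by blast
    qed
  next
    show "B \<subseteq> compl_word ` A"
    proof
      fix v assume v: "v \<in> B"
      have l: "length v = n+1" and vs: "\<forall>a\<in>set v. a < 2"
        using v fac_vals unfolding B_def F_def by blast+
      have "compl_word v \<in> F" using v fac_compl unfolding B_def F_def by blast
      moreover have "compl_word v ! 0 = 0" using v l unfolding B_def compl_word_def by simp
      ultimately have "compl_word v \<in> A" unfolding A_def by blast
      moreover have "v = compl_word (compl_word v)" using cc vs by simp
      ultimately show "v \<in> compl_word ` A" by blast
    qed
  qed
  have injc: "inj_on compl_word A"
  proof (rule inj_onI)
    fix u v assume "u \<in> A" "v \<in> A" "compl_word u = compl_word v"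
    moreover have "\<forall>a\<in>set u. a < 2" "\<forall>a\<in>set v. a < 2"
      using \<open>u \<in> A\<close> \<open>v \<in> A\<close> fac_vals unfolding A_def F_def by blast+
    ultimately show "u = v" using cc by metis
  qed
  have cardB: "card B = card A" using card_image[OF injc] imgB by simp
  have injphi: "inj_on (phi n) A"
  proof (rule inj_onI)
    fix u v assume u: "u \<in> A" and v: "v \<in> A" and eq: "phi n u = phi n v"
    obtain i where i: "u = map t32 [i..<i+(n+1)]" using u unfolding A_def F_def factors_len_def by blast
    obtain i' where i': "v = map t32 [i'..<i'+(n+1)]" using v unfolding A_def F_def factors_len_def by blast
    have u0: "t32 i = 0" using u i unfolding A_def by (simp del: upt_Suc)
    have v0: "t32 i' = 0" using v i' unfolding A_def by (simp del: upt_Suc)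
    have dd: "Delta t32 (i+k) = Delta t32 (i'+k)" if "k < n" for k
    proof -
      have "map (Delta t32) [i..<i+n] = map (Delta t32) [i'..<i'+n]"
        using eq unfolding i i' phi_fac .
      then have "map (Delta t32) [i..<i+n] ! k = map (Delta t32) [i'..<i'+n] ! k" by simp
      then show ?thesis using that by simp
    qed
    have st: "k \<le> n \<Longrightarrow> t32 (i+k) = t32 (i'+k)" for k
    proof (induction k)
      case 0 then show ?case using u0 v0 by simp
    next
      case (Suc k)
      then have h: "t32 (i+k) = t32 (i'+k)" by simp
      have d: "Delta t32 (i+k) = Delta t32 (i'+k)" using dd Suc.prems by simp
      have "t32 (Suc (i+k)) < 2" "t32 (Suc (i'+k)) < 2" "t32 (i'+k) < 2" by (rule t32_lt)+
      moreover have "nat ((int (t32 (Suc (i+k))) - int (t32 (i'+k))) mod 2) =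
                     nat ((int (t32 (Suc (i'+k))) - int (t32 (i'+k))) mod 2)"
        using d h unfolding Delta_def by simp
      ultimately have "t32 (Suc (i+k)) = t32 (Suc (i'+k))"
        by (cases "t32 (Suc (i+k))"; cases "t32 (Suc (i'+k))"; cases "t32 (i'+k)") auto
      then show ?case by simp
    qed
    show "u = v" unfolding i i'
      by (rule nth_equalityI) (simp_all add: st del: upt_Suc)
  qed
  have imgphi: "phi n ` A = G"
  proof
    show "phi n ` A \<subseteq> G"
    proof
      fix g assume "g \<in> phi n ` A"
      then obtain u where "u \<in> A" "g = phi n u" by blast
      then obtain i where "g = phi n (map t32 [i..<i+(n+1)])"
        unfolding A_def F_def factors_len_def by blast
      then show "g \<in> G" unfolding G_def factors_len_def phi_fac by blast
    qed
  next
    show "G \<subseteq> phi n ` A"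
    proof
      fix g assume "g \<in> G"
      then obtain i where g: "g = map (Delta t32) [i..<i+n]" unfolding G_def factors_len_def by blast
      define u where "u = map t32 [i..<i+(n+1)]"
      have uF: "u \<in> F" unfolding u_def F_def factors_len_def by blast
      have gu: "g = phi n u" unfolding g u_def phi_fac ..
      show "g \<in> phi n ` A"
      proof (cases "t32 i = 0")
        case True
        then have "u \<in> A" using uF unfolding A_def u_def by (simp del: upt_Suc)
        then show ?thesis using gu by blast
      next
        case False
        then have "u \<in> B" using uF t32_lt[of i] unfolding B_def u_def by (simp del: upt_Suc)
        then obtain w where w: "w \<in> A" "u = compl_word w" using imgB by blast
        have "phi n u = phi n w" unfolding w(2)
          by (rule phi_compl) (use w fac_vals in \<open>unfold A_def F_def, blast+\<close>)
        then show ?thesis using gu w by blast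
      qed
    qed
  qed
  have "complexity t32 (n+1) = card F" unfolding complexity_def F_def ..
  also have "\<dots> = card A + card B" using FAB disj finA card_Un_disjoint by simp
  also have "\<dots> = 2 * card A" using cardB by simp
  also have "card A = card G" using card_image[OF injphi] imgphi by simp
  also have "card G = complexity (Delta t32) n" unfolding complexity_def G_def ..
  finally show ?thesis .
qed

theorem proposition15:
  shows "closed_under_compl (factors t32) \<and> closed_under_compl (factors dekking) \<and>
         (\<forall>n. complexity t32 (n + 1) = 2 * complexity (Delta t32) n)"
  using closed_t32 closed_dekking complexity_rel by blast

end
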